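(* Let $k\ge 2$ and let $\mathbf{x}_1,\ldots,\mathbf{x}_k$ be norm one vectors in a real Hilbert space $\mathcal H$ with $\dim(\operatorname{span}\{\mathbf{x}_1,\ldots,\mathbf{x}_k\})=2$. If $S,T\in\mathcal L_s(^k\mathcal H)$ have norm one and $S(\mathbf{x}_1,\ldots,\mathbf{x}_k)=T(\mathbf{x}_1,\ldots,\mathbf{x}_k)=1$, then, setting $\mathcal H_1=\operatorname{span}\{\mathbf{x}_1,\ldots,\mathbf{x}_k\}$, the restrictions of $S$ and $T$ to $\mathcal H_1\times\cdots\times\mathcal H_1$ coincide.
   Context: $\mathcal L_s(^k\mathcal H)$ is the Banach space of continuous symmetric real-valued $k$-linear forms on $\mathcal H$ with norm $\|T\|=\sup\{|T(\mathbf{w}_1,\ldots,\mathbf{w}_k)|:\|\mathbf{w}_i\|\le1\}$. *)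

theory Defs
  imports "HOL-Analysis.Analysis"
begin

text \<open>A k-linear form on H is modelled as a real-valued function of a family
  w :: nat => H, of which only the entries w 0, ..., w (k-1) matter.\<close>

definition klinear :: "nat \<Rightarrow> ((nat \<Rightarrow> 'a::real_vector) \<Rightarrow> real) \<Rightarrow> bool" where
  "klinear k T \<longleftrightarrow>
     (\<forall>w w'. (\<forall>i<k. w i = w' i) \<longrightarrow> T w = T w') \<and>
     (\<forall>i<k. \<forall>w. linear (\<lambda>x. T (w(i := x))))"

definition ksymmetric :: "nat \<Rightarrow> ((nat \<Rightarrow> 'a) \<Rightarrow> real) \<Rightarrow> bool" where
  "ksymmetric k T \<longleftrightarrow> (\<forall>\<sigma> w. \<sigma> permutes {..<k} \<longrightarrow> T (w \<circ> \<sigma>) = T w)"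

text \<open>Continuous symmetric k-linear forms; continuity w.r.t. the product topology
  on families (T only depends on the first k entries, so this is continuity on H^k).\<close>
definition Ls :: "nat \<Rightarrow> ((nat \<Rightarrow> 'a::real_normed_vector) \<Rightarrow> real) set" where
  "Ls k = {T. klinear k T \<and> ksymmetric k T \<and> continuous_on UNIV T}"

definition mlnorm :: "nat \<Rightarrow> ((nat \<Rightarrow> 'a::real_normed_vector) \<Rightarrow> real) \<Rightarrow> real" where
  "mlnorm k T = Sup {\<bar>T w\<bar> | w. \<forall>i<k. norm (w i) \<le> 1}"

end

theory Submission
  imports Defs
begin


definition par :: "'a::real_vector \<Rightarrow> 'a \<Rightarrow> bool" where
  "par a b \<longleftrightarrow> (\<exists>c. b = c *\<^sub>R a) \<or> (\<exists>c. a = c *\<^sub>R b)"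

definition good :: "nat \<Rightarrow> 'a::real_inner set \<Rightarrow> ((nat \<Rightarrow> 'a) \<Rightarrow> real) \<Rightarrow> bool" where
  "good k P S \<longleftrightarrow> (\<forall>w w'. (\<forall>i<k. w i = w' i) \<longrightarrow> S w = S w') \<and>
     (\<forall>i<k. \<forall>w. linear (\<lambda>y. S (w(i:=y)))) \<and>
     (\<forall>i<k. \<forall>j<k. \<forall>w. S (w \<circ> Transposition.transpose i j) = S w) \<and>
     (\<forall>w. (\<forall>i<k. w i \<in> P) \<longrightarrow> \<bar>S w\<bar> \<le> (\<Prod>i<k. norm (w i)))"

lemma par_refl: "par a a"
  unfolding par_def by (metis scaleR_one)

lemma par_sym: "par a b \<Longrightarrow> par b a"
  unfolding par_def by blast

lemma par_trans: assumes "b \<noteq> 0" "par a b" "par b c" shows "par a c"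
proof -
  from assms(2) obtain c1 where h1: "b = c1 *\<^sub>R a \<or> a = c1 *\<^sub>R b" unfolding par_def by blast
  from assms(3) obtain c2 where h2: "c = c2 *\<^sub>R b \<or> b = c2 *\<^sub>R c" unfolding par_def by blast
  show ?thesis
  proof (cases "b = c1 *\<^sub>R a")
    case True
    then have "c1 \<noteq> 0" using assms(1) by auto
    then have a: "a = (1/c1) *\<^sub>R b" using True by auto
    show ?thesis using h2
    proof
      assume "c = c2 *\<^sub>R b" then show ?thesis using True unfolding par_def by auto
    next
      assume "b = c2 *\<^sub>R c" then show ?thesis using a unfolding par_def by auto
    qed
  next
    case False
    then have a: "a = c1 *\<^sub>R b" using h1 by auto
    show ?thesis using h2
    proof
      assume c: "c = c2 *\<^sub>R b"
      show ?thesis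
      proof (cases "c1 = 0")
        case True then show ?thesis using a unfolding par_def by (metis scaleR_zero_left)
      next
        case False
        then have "b = (1/c1) *\<^sub>R a" using a by auto
        then show ?thesis using c unfolding par_def by auto
      qed
    next
      assume "b = c2 *\<^sub>R c" then show ?thesis using a unfolding par_def by auto
    qed
  qed
qed

lemma par_u:
  assumes "\<not> par a b" "s \<noteq> 0"
  shows "\<not> par (s *\<^sub>R (a + b)) b" "\<not> par (s *\<^sub>R (a + b)) a"
proof -
  show "\<not> par (s *\<^sub>R (a + b)) b"
  proof
    assume "par (s *\<^sub>R (a + b)) b"
    then obtain c where "b = c *\<^sub>R (s *\<^sub>R (a + b)) \<or> s *\<^sub>R (a + b) = c *\<^sub>R b" unfolding par_def by blast
    then show False
    proof
      assume h: "b = c *\<^sub>R (s *\<^sub>R (a + b))"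
      then have "(1 - (c * s)) *\<^sub>R b = (c * s) *\<^sub>R a" by (simp add: algebra_simps)
      then show False
      proof (cases "(c * s) = 0")
        case True then show False using h assms unfolding par_def by (metis scaleR_zero_left mult_zero_left scaleR_scaleR)
      next
        case False
        then have "a = ((1 - (c * s))/(c * s)) *\<^sub>R b"
          using \<open>(1 - (c * s)) *\<^sub>R b = (c * s) *\<^sub>R a\<close> by (metis (no_types, lifting) divide_inverse_commute eq_vector_fraction_iff)
        then show False using assms unfolding par_def by blast
      qed
    next
      assume "s *\<^sub>R (a + b) = c *\<^sub>R b"
      then have "s *\<^sub>R a = (c - s) *\<^sub>R b" by (simp add: algebra_simps)
      then have "a = ((c - s)/s) *\<^sub>R b" using assms(2) by (metis eq_vector_fraction_iff)
      then show False using assms unfolding par_def by blast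
    qed
  qed
  show "\<not> par (s *\<^sub>R (a + b)) a"
  proof
    assume "par (s *\<^sub>R (a + b)) a"
    then obtain c where "a = c *\<^sub>R (s *\<^sub>R (a + b)) \<or> s *\<^sub>R (a + b) = c *\<^sub>R a" unfolding par_def by blast
    then show False
    proof
      assume h: "a = c *\<^sub>R (s *\<^sub>R (a + b))"
      then have "(1 - (c * s)) *\<^sub>R a = (c * s) *\<^sub>R b" by (simp add: algebra_simps)
      then show False
      proof (cases "(c * s) = 0")
        case True then show False using h assms unfolding par_def by (metis scaleR_zero_left mult_zero_left scaleR_scaleR)
      next
        case False
        then have "b = ((1 - (c * s))/(c * s)) *\<^sub>R a"
          using \<open>(1 - (c * s)) *\<^sub>R a = (c * s) *\<^sub>R b\<close> by (metis (no_types, lifting) divide_inverse_commute eq_vector_fraction_iff)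
        then show False using assms unfolding par_def by blast
      qed
    next
      assume "s *\<^sub>R (a + b) = c *\<^sub>R a"
      then have "s *\<^sub>R b = (c - s) *\<^sub>R a" by (simp add: algebra_simps)
      then have "b = ((c - s)/s) *\<^sub>R a" using assms(2) by (metis eq_vector_fraction_iff)
      then show False using assms unfolding par_def by blast
    qed
  qed
qed

lemma span2:
  fixes P :: "'a::real_inner set"
  assumes "subspace P" "dim P = 2" "a \<in> P" "b \<in> P" "\<not> par a b" "v \<in> P"
  shows "\<exists>\<alpha> \<beta>. v = \<alpha> *\<^sub>R a + \<beta> *\<^sub>R b"
proof -
  have ab: "a \<noteq> b" using assms(5) par_refl by metis
  have b0: "b \<noteq> 0" using assms(5) unfolding par_def by (metis scaleR_zero_left)
  have "a \<notin> span {b}" using assms(5) unfolding span_singleton par_def by auto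
  then have ind: "independent {a, b}" using b0 by (simp add: independent_insert)
  obtain B where B: "B \<subseteq> P" "independent B" "P \<subseteq> span B" "card B = dim P"
    using basis_exists by blast
  have fB: "finite B" using B assms(2) by (metis card.infinite zero_neq_numeral)
  have "P \<subseteq> span {a, b}"
  proof
    fix v assume v: "v \<in> P"
    show "v \<in> span {a, b}"
    proof (rule ccontr)
      assume nv: "v \<notin> span {a, b}"
      then have "independent (insert v {a, b})" using ind b0 by (simp add: independent_insert)
      moreover have "insert v {a, b} \<subseteq> span B" using B v assms(3,4) by auto
      ultimately have "card (insert v {a, b}) \<le> card B"
        using independent_span_bound[OF fB] by blast
      moreover have "card (insert v {a, b}) = 3" using nv ab span_base[of v "{a,b}"] by (auto simp: card_insert_if)
      ultimately show False using B assms(2) by simp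
    qed
  qed
  then have "v \<in> span {a, b}" using assms(6) by auto
  then obtain \<alpha> where "v - \<alpha> *\<^sub>R a \<in> span {b}" unfolding span_insert by auto
  then obtain \<beta> where "v - \<alpha> *\<^sub>R a = \<beta> *\<^sub>R b" unfolding span_singleton by auto
  then have "v = \<alpha> *\<^sub>R a + \<beta> *\<^sub>R b" by (simp add: algebra_simps)
  then show ?thesis by blast
qed



lemma good_lin:
  assumes "good k P S" "i < k"
  shows "S (w(i := a *\<^sub>R y + b *\<^sub>R z)) = a * S (w(i:=y)) + b * S (w(i:=z))"
proof -
  have l: "linear (\<lambda>y. S (w(i:=y)))" using assms unfolding good_def by blast
  show ?thesis using linear_add[OF l] linear_cmul[OF l] by simp
qed

lemma good_loc: "good k P S \<Longrightarrow> \<forall>i<k. w i = w' i \<Longrightarrow> S w = S w'"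
  unfolding good_def by blast

lemma good_sym: "good k P S \<Longrightarrow> i < k \<Longrightarrow> j < k \<Longrightarrow> S (w \<circ> Transposition.transpose i j) = S w"
  unfolding good_def by blast

lemma good_bound: "good k P S \<Longrightarrow> \<forall>i<k. w i \<in> P \<Longrightarrow> \<bar>S w\<bar> \<le> (\<Prod>i<k. norm (w i))"
  unfolding good_def by blast

lemma repl:
  fixes x :: "nat \<Rightarrow> 'a::real_inner"
  assumes g: "good k P S" and P: "subspace P" and x: "\<forall>i<k. x i \<in> P \<and> norm (x i) = 1"
    and Sx: "S x = 1" and i: "i < k" and y: "y \<in> P"
  shows "S (x(i:=y)) = x i \<bullet> y"
proof -
  define f where "f = (\<lambda>y. S (x(i:=y)))"
  have fxi: "f (x i) = 1" using Sx by (simp add: f_def)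
  have bnd: "\<bar>f v\<bar> \<le> norm v" if v: "v \<in> P" for v
  proof -
    have "\<bar>f v\<bar> \<le> (\<Prod>j<k. norm ((x(i:=v)) j))"
    proof -
      have "\<forall>j<k. (x(i:=v)) j \<in> P" using x v by auto
      then show ?thesis unfolding f_def by (rule good_bound[OF g])
    qed
    also have "(\<Prod>j<k. norm ((x(i:=v)) j)) = norm v * (\<Prod>j\<in>{..<k}-{i}. norm ((x(i:=v)) j))"
      using i by (subst prod.remove[of _ i]) auto
    also have "(\<Prod>j\<in>{..<k}-{i}. norm ((x(i:=v)) j)) = 1"
      using x by (intro prod.neutral) auto
    finally show ?thesis by simp
  qed
  have xi1: "x i \<bullet> x i = 1" using x i by (metis norm_eq_1)
  have xiP: "x i \<in> P" using x i by auto
  define z where "z = y - (x i \<bullet> y) *\<^sub>R x i"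
  have zP: "z \<in> P" unfolding z_def using P y xiP by (simp add: subspace_diff subspace_scale)
  have xz: "x i \<bullet> z = 0" unfolding z_def using xi1 by (simp add: inner_diff_right)
  have fy: "f y = f z + (x i \<bullet> y)"
  proof -
    have "y = 1 *\<^sub>R z + (x i \<bullet> y) *\<^sub>R x i" unfolding z_def by simp
    then have "f y = f (1 *\<^sub>R z + (x i \<bullet> y) *\<^sub>R x i)" by simp
    also have "\<dots> = f z + (x i \<bullet> y) * f (x i)"
      unfolding f_def using good_lin[OF g i, where w=x and a=1 and y=z and b="x i \<bullet> y" and z="x i"] by simp
    finally show ?thesis using fxi by simp
  qed
  define c where "c = z \<bullet> z"
  have c0: "c \<ge> 0" unfolding c_def by simp
  have key: "2 * t * f z \<le> t^2 * c" for t
  proof -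
    have "f (1 *\<^sub>R x i + t *\<^sub>R z) = f (x i) + t * f z"
      unfolding f_def using good_lin[OF g i, where w=x and a=1 and y="x i" and b=t and z=z] by simp
    then have h0: "f (x i + t *\<^sub>R z) = 1 + t * f z" using fxi by simp
    have "x i + t *\<^sub>R z \<in> P" using P xiP zP by (simp add: subspace_add subspace_scale)
    then have h1: "1 + t * f z \<le> norm (x i + t *\<^sub>R z)" using bnd h0 by fastforce
    have h2: "(norm (x i + t *\<^sub>R z))^2 = 1 + t^2 * c"
      unfolding power2_norm_eq_inner c_def using xi1 xz
      by (simp add: inner_add_left inner_add_right inner_commute power2_eq_square)
    show ?thesis
    proof (cases "1 + t * f z \<le> 0")
      case True
      then have "2 * t * f z \<le> -2" by simp
      moreover have "t^2 * c \<ge> 0" using c0 by simp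
      ultimately show ?thesis by linarith
    next
      case False
      then have "(1 + t * f z)^2 \<le> (norm (x i + t *\<^sub>R z))^2"
        using h1 by (intro power_mono) auto
      then have "1 + 2 * t * f z + (t * f z)^2 \<le> 1 + t^2 * c"
        using h2 by (simp add: power2_eq_square algebra_simps)
      moreover have "(t * f z)^2 \<ge> 0" by simp
      ultimately show ?thesis by linarith
    qed
  qed
  have fz: "f z = 0"
  proof -
    define a where "a = f z"
    have "2 * (a / (c+1)) * a \<le> (a/(c+1))^2 * c" using key[of "a/(c+1)"] unfolding a_def by simp
    then have m: "(2 * (a / (c+1)) * a) * (c+1)^2 \<le> ((a/(c+1))^2 * c) * (c+1)^2"
      by (rule mult_right_mono) simp
    have c1: "c + 1 \<noteq> 0" using c0 by simp
    have e1: "(2 * (a / (c+1)) * a) * (c+1)^2 = 2 * a^2 * (c+1)" using c1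
      by (simp add: power2_eq_square field_simps)
    have q: "a/(c+1) * (c+1) = a" using c1 by simp
    have q2: "(a/(c+1))^2 * (c+1)^2 = a^2"
    proof -
      have "(a/(c+1))^2 * (c+1)^2 = (a/(c+1) * (c+1))^2" by (simp only: power_mult_distrib)
      then show ?thesis by (simp only: q)
    qed
    have e2: "((a/(c+1))^2 * c) * (c+1)^2 = a^2 * c"
    proof -
      have "((a/(c+1))^2 * c) * (c+1)^2 = ((a/(c+1))^2 * (c+1)^2) * c" by (simp only: ac_simps)
      then show ?thesis by (simp only: q2)
    qed
    have h: "2 * a^2 * (c+1) \<le> a^2 * c" using m unfolding e1 e2 .
    have h2: "a^2 * (c + 2) = 2 * a^2 * (c+1) - a^2 * c" by (simp add: algebra_simps)
    have h3: "a^2 * (c + 2) \<le> 0" using h h2 by linarith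
    have h4: "a^2 * (c + 2) \<ge> 0" using c0 by simp
    have "a^2 * (c + 2) = 0" using h3 h4 by linarith
    moreover have "c + 2 \<noteq> 0" using c0 by simp
    ultimately show ?thesis unfolding a_def by simp
  qed
  show ?thesis using fy fz by (simp add: f_def)
qed

lemma pairval:
  fixes x :: "nat \<Rightarrow> 'a::real_inner"
  assumes g: "good k P S" and P: "subspace P" and x: "\<forall>i<k. x i \<in> P \<and> norm (x i) = 1"
    and Sx: "S x = 1" and i: "i < k" and j: "j < k" and ij: "i \<noteq> j" and q: "q \<in> P"
  shows "S (x(i := a *\<^sub>R x i + b *\<^sub>R x j, j := q)) = a * (x j \<bullet> q) + b * (x i \<bullet> q)"
proof -
  have e: "x(i := a *\<^sub>R x i + b *\<^sub>R x j, j := q) = (x(j:=q))(i := a *\<^sub>R x i + b *\<^sub>R x j)"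
    using ij by (simp add: fun_upd_twist)
  have "S ((x(j:=q))(i := a *\<^sub>R x i + b *\<^sub>R x j)) =
      a * S ((x(j:=q))(i := x i)) + b * S ((x(j:=q))(i := x j))"
    using good_lin[OF g i] by blast
  moreover have "(x(j:=q))(i := x i) = x(j:=q)" using ij by (auto simp: fun_eq_iff)
  moreover have "S (x(j:=q)) = x j \<bullet> q" using repl[OF g P x Sx j q] .
  moreover have "S ((x(j:=q))(i := x j)) = x i \<bullet> q"
  proof -
    have "((x(j:=q))(i := x j)) \<circ> Transposition.transpose i j = x(i:=q)"
      using ij by (auto simp: fun_eq_iff Transposition.transpose_def)
    then have "S ((x(j:=q))(i := x j)) = S (x(i:=q))"
      using good_sym[OF g i j, of "(x(j:=q))(i := x j)"] by simp
    also have "\<dots> = x i \<bullet> q" using repl[OF g P x Sx i q] .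
    finally show ?thesis .
  qed
  ultimately show ?thesis using e by simp
qed

lemma ulemma:
  fixes x :: "nat \<Rightarrow> 'a::real_inner"
  assumes g: "good k P S" and P: "subspace P" and x: "\<forall>i<k. x i \<in> P \<and> norm (x i) = 1"
    and Sx: "S x = 1" and i: "i < k" and j: "j < k" and ij: "i \<noteq> j"
    and nz: "x i + x j \<noteq> 0"
    and u: "u = (1 / norm (x i + x j)) *\<^sub>R (x i + x j)"
  shows "S (x(i := u, j := u)) = 1"
proof -
  define s where "s = 1 / norm (x i + x j)"
  have uu: "u = s *\<^sub>R x i + s *\<^sub>R x j" unfolding u s_def by (simp add: scaleR_right_distrib)
  have uP: "u \<in> P" using x i j P unfolding u by (simp add: subspace_add subspace_scale)
  have "S (x(i := u, j := u)) = s * (x j \<bullet> u) + s * (x i \<bullet> u)"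
  proof -
    have pv: "S (x(i := s *\<^sub>R x i + s *\<^sub>R x j, j := u)) = s * (x j \<bullet> u) + s * (x i \<bullet> u)"
      by (rule pairval[OF g P x Sx i j ij uP])
    show ?thesis using pv by (simp only: uu[symmetric])
  qed
  also have "\<dots> = s * ((x i + x j) \<bullet> u)" by (simp add: inner_add_left algebra_simps)
  also have "\<dots> = s * s * ((x i + x j) \<bullet> (x i + x j))" unfolding u s_def by simp
  also have "\<dots> = 1" unfolding s_def using nz
    by (simp add: power2_norm_eq_inner[symmetric] power2_eq_square)
  finally show ?thesis .
qed



lemma case_nat_upd: "case_nat a (w(i:=y)) = (case_nat a w)(Suc i := y)"
  by (auto simp: fun_eq_iff split: nat.splits)

lemma case_nat_transpose:
  "case_nat a (w \<circ> Transposition.transpose i j) = (case_nat a w) \<circ> Transposition.transpose (Suc i) (Suc j)"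
  by (auto simp: fun_eq_iff Transposition.transpose_def split: nat.splits)

lemma good_shift:
  assumes g: "good (Suc k) P S" and a: "norm a = 1" and aP: "a \<in> P"
  shows "good k P (\<lambda>w. S (case_nat a w))"
  unfolding good_def
proof (intro conjI allI impI)
  fix w w' :: "nat \<Rightarrow> 'a" assume "\<forall>i<k. w i = w' i"
  then have "\<forall>i<Suc k. case_nat a w i = case_nat a w' i" by (auto split: nat.splits simp: less_Suc_eq_0_disj)
  then show "S (case_nat a w) = S (case_nat a w')" by (rule good_loc[OF g])
next
  fix i w assume i: "i < k"
  have "linear (\<lambda>y. S ((case_nat a w)(Suc i := y)))" using g i unfolding good_def by auto
  then show "linear (\<lambda>y. S (case_nat a (w(i := y))))" by (simp add: case_nat_upd)
next
  fix i j w assume i: "i < k" and j: "j < k"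
  show "S (case_nat a (w \<circ> Transposition.transpose i j)) = S (case_nat a w)"
    unfolding case_nat_transpose using good_sym[OF g] i j by simp
next
  fix w assume w: "\<forall>i<k. w i \<in> P"
  show "\<bar>S (case_nat a w)\<bar> \<le> (\<Prod>i<k. norm (w i))"
  proof -
    have "\<forall>i<Suc k. case_nat a w i \<in> P" using w aP by (auto split: nat.splits simp: less_Suc_eq_0_disj)
    then have "\<bar>S (case_nat a w)\<bar> \<le> (\<Prod>i<Suc k. norm (case_nat a w i))" by (rule good_bound[OF g])
    also have "\<dots> = (\<Prod>i<k. norm (w i))" using a by (simp add: prod.lessThan_Suc_shift del: prod.lessThan_Suc)
    finally show ?thesis .
  qed
qed

lemma front:
  fixes z :: "nat \<Rightarrow> 'a::real_inner"
  assumes k2: "2 \<le> k" and P: "subspace P" and dP: "dim P = 2"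
    and gS: "good (Suc k) P S" and gT: "good (Suc k) P T"
    and z: "\<forall>i<Suc k. z i \<in> P \<and> norm (z i) = 1" and Sz: "S z = 1" and Tz: "T z = 1"
    and m: "m < Suc k" and p: "p < Suc k" and q: "q < Suc k" and pm: "p \<noteq> m" and qm: "q \<noteq> m"
    and npq: "\<not> par (z p) (z q)"
    and IH: "\<And>S T x i j. 2 \<le> k \<Longrightarrow> subspace P \<Longrightarrow> dim P = 2 \<Longrightarrow> good k P S \<Longrightarrow> good k P T \<Longrightarrow>
       \<forall>i<k. x i \<in> P \<and> norm (x i) = 1 \<Longrightarrow> i < k \<Longrightarrow> j < k \<Longrightarrow> \<not> par (x i) (x j) \<Longrightarrow>
       S x = 1 \<Longrightarrow> T x = 1 \<Longrightarrow> \<forall>w. (\<forall>i<k. w i \<in> P) \<longrightarrow> S w = T w"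
  shows "\<forall>w. (\<forall>i<k. w i \<in> P) \<longrightarrow> S (case_nat (z m) w) = T (case_nat (z m) w)"
proof -
  define \<tau> where "\<tau> = Transposition.transpose 0 m"
  define x' where "x' = (\<lambda>n. z (\<tau> (Suc n)))"
  have cz: "case_nat (z m) x' = z \<circ> \<tau>"
    by (auto simp: fun_eq_iff x'_def \<tau>_def split: nat.splits)
  have zm: "norm (z m) = 1" "z m \<in> P" using z m by auto
  have tau_lt: "\<tau> n < Suc k" if "n < Suc k" for n
    using that m unfolding \<tau>_def Transposition.transpose_def by auto
  have tau_tau: "\<tau> (\<tau> n) = n" for n unfolding \<tau>_def by simp
  have gS': "good k P (\<lambda>w. S (case_nat (z m) w))" by (rule good_shift[OF gS zm])
  have gT': "good k P (\<lambda>w. T (case_nat (z m) w))" by (rule good_shift[OF gT zm])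
  have x'u: "\<forall>i<k. x' i \<in> P \<and> norm (x' i) = 1"
    unfolding x'_def using z tau_lt by auto
  have S1: "S (case_nat (z m) x') = 1" unfolding cz \<tau>_def using good_sym[OF gS, of 0 m z] m Sz by simp
  have T1: "T (case_nat (z m) x') = 1" unfolding cz \<tau>_def using good_sym[OF gT, of 0 m z] m Tz by simp
  have tp0: "\<tau> p \<noteq> 0" using pm unfolding \<tau>_def Transposition.transpose_def by auto
  have tq0: "\<tau> q \<noteq> 0" using qm unfolding \<tau>_def Transposition.transpose_def by auto
  define i' where "i' = \<tau> p - 1"
  define j' where "j' = \<tau> q - 1"
  have si: "Suc i' = \<tau> p" using tp0 unfolding i'_def by simp
  have sj: "Suc j' = \<tau> q" using tq0 unfolding j'_def by simp
  have i'k: "i' < k" using tau_lt[OF p] si by simp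
  have j'k: "j' < k" using tau_lt[OF q] sj by simp
  have xi: "x' i' = z p" unfolding x'_def si tau_tau ..
  have xj: "x' j' = z q" unfolding x'_def sj tau_tau ..
  show ?thesis
    using IH[of "\<lambda>w. S (case_nat (z m) w)" "\<lambda>w. T (case_nat (z m) w)" x' i' j', OF k2 P dP gS' gT' x'u i'k j'k]
      npq xi xj S1 T1 by simp
qed

lemma combine:
  fixes P :: "'a::real_inner set"
  assumes P: "subspace P" and dP: "dim P = 2"
    and gS: "good (Suc k) P S" and gT: "good (Suc k) P T"
    and a1: "a1 \<in> P" and a2: "a2 \<in> P" and np: "\<not> par a1 a2"
    and H1: "\<forall>w. (\<forall>i<k. w i \<in> P) \<longrightarrow> S (case_nat a1 w) = T (case_nat a1 w)"
    and H2: "\<forall>w. (\<forall>i<k. w i \<in> P) \<longrightarrow> S (case_nat a2 w) = T (case_nat a2 w)"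
  shows "\<forall>w. (\<forall>i<Suc k. w i \<in> P) \<longrightarrow> S w = T w"
proof (intro allI impI)
  fix w :: "nat \<Rightarrow> 'a" assume w: "\<forall>i<Suc k. w i \<in> P"
  obtain \<alpha> \<beta> where ab: "w 0 = \<alpha> *\<^sub>R a1 + \<beta> *\<^sub>R a2"
    using span2[OF P dP a1 a2 np, of "w 0"] w by auto
  define w' where "w' = (\<lambda>n. w (Suc n))"
  have w'P: "\<forall>i<k. w' i \<in> P" using w unfolding w'_def by auto
  have ww: "w = (case_nat a1 w')(0 := \<alpha> *\<^sub>R a1 + \<beta> *\<^sub>R a2)"
    using ab by (auto simp: fun_eq_iff w'_def split: nat.splits)
  have c1: "(case_nat a1 w')(0 := a1) = case_nat a1 w'" by (auto simp: fun_eq_iff split: nat.splits)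
  have c2: "(case_nat a1 w')(0 := a2) = case_nat a2 w'" by (auto simp: fun_eq_iff split: nat.splits)
  have "S w = \<alpha> * S (case_nat a1 w') + \<beta> * S (case_nat a2 w')"
    unfolding ww using good_lin[OF gS, of 0 "case_nat a1 w'" \<alpha> a1 \<beta> a2] c1 c2 by simp
  moreover have "T w = \<alpha> * T (case_nat a1 w') + \<beta> * T (case_nat a2 w')"
    unfolding ww using good_lin[OF gT, of 0 "case_nat a1 w'" \<alpha> a1 \<beta> a2] c1 c2 by simp
  ultimately show "S w = T w" using H1 H2 w'P by simp
qed



lemma core:
  fixes x :: "nat \<Rightarrow> 'a::real_inner"
  shows "2 \<le> k \<Longrightarrow> subspace P \<Longrightarrow> dim P = 2 \<Longrightarrow> good k P S \<Longrightarrow> good k P T \<Longrightarrow>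
    \<forall>i<k. x i \<in> P \<and> norm (x i) = 1 \<Longrightarrow> i < k \<Longrightarrow> j < k \<Longrightarrow> \<not> par (x i) (x j) \<Longrightarrow>
    S x = 1 \<Longrightarrow> T x = 1 \<Longrightarrow> \<forall>w. (\<forall>i<k. w i \<in> P) \<longrightarrow> S w = T w"
proof (induction k arbitrary: S T x i j)
  case 0
  then show ?case by simp
next
  case (Suc k)
  note P = Suc.prems(2) and dP = Suc.prems(3) and gS = Suc.prems(4) and gT = Suc.prems(5)
    and x = Suc.prems(6) and i = Suc.prems(7) and j = Suc.prems(8) and np = Suc.prems(9)
    and Sx = Suc.prems(10) and Tx = Suc.prems(11)
  have ij: "i \<noteq> j" using np par_refl by metis
  show ?case
  proof (cases "k < 2")
    case True
    then have k1: "k = 1" using Suc.prems(1) by simp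
    show ?thesis
    proof (intro allI impI)
      fix w assume w: "\<forall>n<Suc k. w n \<in> P"
      obtain \<alpha> \<beta> where ab: "w i = \<alpha> *\<^sub>R x i + \<beta> *\<^sub>R x j"
        using span2[OF P dP _ _ np, of "w i"] x i j w by auto
      have agree: "\<forall>n<Suc k. w n = (x(i := \<alpha> *\<^sub>R x i + \<beta> *\<^sub>R x j, j := w j)) n"
      proof (intro allI impI)
        fix n assume "n < Suc k"
        then have "n = i \<or> n = j" using k1 i j ij by auto
        then show "w n = (x(i := \<alpha> *\<^sub>R x i + \<beta> *\<^sub>R x j, j := w j)) n" using ab ij by auto
      qed
      have wj: "w j \<in> P" using w j by auto
      have "S w = S (x(i := \<alpha> *\<^sub>R x i + \<beta> *\<^sub>R x j, j := w j))" using good_loc[OF gS agree] .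
      also have "\<dots> = \<alpha> * (x j \<bullet> w j) + \<beta> * (x i \<bullet> w j)" by (rule pairval[OF gS P x Sx i j ij wj])
      also have "\<dots> = T (x(i := \<alpha> *\<^sub>R x i + \<beta> *\<^sub>R x j, j := w j))" by (rule pairval[OF gT P x Tx i j ij wj, symmetric])
      also have "\<dots> = T w" by (rule sym[OF good_loc[OF gT agree]])
      finally show "S w = T w" .
    qed
  next
    case False
    then have k2: "2 \<le> k" by simp
    define l where "l = (if 0 \<noteq> i \<and> 0 \<noteq> j then 0 else if 1 \<noteq> i \<and> 1 \<noteq> j then 1 else (2::nat))"
    have l: "l < Suc k" "l \<noteq> i" "l \<noteq> j" using k2 ij unfolding l_def by auto
    have nz: "x n \<noteq> 0" if "n < Suc k" for n using x that by (metis norm_zero zero_neq_one)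
    have xP: "x n \<in> P" if "n < Suc k" for n using x that by auto
    have fr: "\<forall>w. (\<forall>i<k. w i \<in> P) \<longrightarrow> S (case_nat (z m) w) = T (case_nat (z m) w)"
      if "good (Suc k) P S" "good (Suc k) P T" "\<forall>i<Suc k. z i \<in> P \<and> norm (z i) = 1" "S z = 1" "T z = 1"
        "m < Suc k" "p < Suc k" "q < Suc k" "p \<noteq> m" "q \<noteq> m" "\<not> par (z p) (z q)"
      for S T z m p q
      by (rule front[OF k2 P dP that Suc.IH])
    define u where "u = (1 / norm (x i + x j)) *\<^sub>R (x i + x j)"
    have sum_nz: "x i + x j \<noteq> 0"
    proof
      assume "x i + x j = 0"
      then have "x i = (-1) *\<^sub>R x j" by (simp add: add_eq_0_iff)
      then show False using np unfolding par_def by blast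
    qed
    have s_nz: "1 / norm (x i + x j) \<noteq> 0" using sum_nz by simp
    have nu1: "\<not> par u (x j)" "\<not> par u (x i)" unfolding u_def using par_u[OF np s_nz] by auto
    have uP: "u \<in> P" unfolding u_def using P xP[OF i] xP[OF j] by (simp add: subspace_add subspace_scale)
    have un: "norm u = 1" unfolding u_def using sum_nz by simp
    define z where "z = x(i := u, j := u)"
    have zu: "\<forall>n<Suc k. z n \<in> P \<and> norm (z n) = 1" unfolding z_def using x uP un by auto
    have Sz: "S z = 1" unfolding z_def by (rule ulemma[OF gS P x Sx i j ij sum_nz u_def])
    have Tz: "T z = 1" unfolding z_def by (rule ulemma[OF gT P x Tx i j ij sum_nz u_def])
    have zi: "z i = u" "z j = u" "z l = x l" unfolding z_def using ij l by auto
    show ?thesis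
    proof (cases "par (x l) (x j)")
      case True
      have nil: "\<not> par (x i) (x l)" using True np par_trans[OF nz[OF l(1)]] by blast
      have H1: "\<forall>w. (\<forall>i<k. w i \<in> P) \<longrightarrow> S (case_nat (x j) w) = T (case_nat (x j) w)"
        by (rule fr[OF gS gT x Sx Tx j i l(1) ij l(3) nil])
      have nul: "\<not> par (z j) (z l)" using zi nu1 True par_trans[OF nz[OF l(1)]] by metis
      have H2: "\<forall>w. (\<forall>i<k. w i \<in> P) \<longrightarrow> S (case_nat (z i) w) = T (case_nat (z i) w)"
        by (rule fr[OF gS gT zu Sz Tz i j l(1) ij[symmetric] l(2) nul])
      show ?thesis
        by (rule combine[OF P dP gS gT xP[OF j] uP _ H1 H2[unfolded zi]]) (use nu1 par_sym in blast)
    next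
      case False
      note nlj = False
      show ?thesis
      proof (cases "par (x l) (x i)")
        case True
        have njl: "\<not> par (x j) (x l)" using True np par_trans[OF nz[OF l(1)]] par_sym by blast
        have H1: "\<forall>w. (\<forall>i<k. w i \<in> P) \<longrightarrow> S (case_nat (x i) w) = T (case_nat (x i) w)"
          by (rule fr[OF gS gT x Sx Tx i j l(1) ij[symmetric] l(2) njl])
        have nul: "\<not> par (z i) (z l)" using zi nu1 True par_trans[OF nz[OF l(1)]] by metis
        have H2: "\<forall>w. (\<forall>i<k. w i \<in> P) \<longrightarrow> S (case_nat (z j) w) = T (case_nat (z j) w)"
          by (rule fr[OF gS gT zu Sz Tz j i l(1) ij l(3) nul])
        show ?thesis
          by (rule combine[OF P dP gS gT xP[OF i] uP _ H1 H2[unfolded zi]]) (use nu1 par_sym in blast)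
      next
        case False
        have H1: "\<forall>w. (\<forall>i<k. w i \<in> P) \<longrightarrow> S (case_nat (x i) w) = T (case_nat (x i) w)"
          by (rule fr[OF gS gT x Sx Tx i j l(1) ij[symmetric] l(2)]) (use nlj par_sym in blast)
        have H2: "\<forall>w. (\<forall>i<k. w i \<in> P) \<longrightarrow> S (case_nat (x j) w) = T (case_nat (x j) w)"
          by (rule fr[OF gS gT x Sx Tx j i l(1) ij l(3)]) (use False par_sym in blast)
        show ?thesis
          by (rule combine[OF P dP gS gT xP[OF i] xP[OF j] np H1 H2])
      qed
    qed
  qed
qed



lemma ml_scale:
  fixes m :: nat
  assumes lin: "\<forall>i<k. \<forall>w. linear (\<lambda>y. S (w(i:=y)))"
  shows "m \<le> k \<Longrightarrow> S (\<lambda>i. if i < m then c i *\<^sub>R w i else w i) = (\<Prod>i<m. c i) * S w"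
proof (induction m)
  case 0
  then show ?case by simp
next
  case (Suc m)
  define W where "W = (\<lambda>i. if i < m then c i *\<^sub>R w i else w i)"
  have e: "(\<lambda>i. if i < Suc m then c i *\<^sub>R w i else w i) = W(m := c m *\<^sub>R W m)"
    by (auto simp: fun_eq_iff W_def)
  have l: "linear (\<lambda>y. S (W(m:=y)))" using lin Suc.prems by auto
  have h0: "S (W(m := c m *\<^sub>R W m)) = c m * S (W(m := W m))" using linear_cmul[OF l] by simp
  have h1: "S (W(m := c m *\<^sub>R W m)) = c m * S W" using h0 by simp
  have h2: "S W = (\<Prod>i<m. c i) * S w" using Suc unfolding W_def by simp
  show ?case unfolding e h1 h2 by (simp add: ac_simps)
qed

lemma Ls_bound:
  fixes S :: "(nat \<Rightarrow> 'a::real_normed_vector) \<Rightarrow> real"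
  assumes S: "S \<in> Ls k" and n: "mlnorm k S = 1" and k: "1 \<le> k"
  shows "\<bar>S w\<bar> \<le> (\<Prod>i<k. norm (w i))"
proof -
  have kl: "klinear k S" and cS: "continuous_on UNIV S" using S unfolding Ls_def by auto
  have loc: "\<And>w w'. \<forall>i<k. w i = w' i \<Longrightarrow> S w = S w'" using kl unfolding klinear_def by blast
  have lin: "\<forall>i<k. \<forall>w. linear (\<lambda>y. S (w(i:=y)))" using kl unfolding klinear_def by blast
  have z0: "S (\<lambda>_. 0) = 0"
  proof -
    have "linear (\<lambda>y. S ((\<lambda>_. 0)(0:=y)))" using lin k by auto
    then have "S ((\<lambda>_. 0)(0:=0)) = 0" by (rule linear_0)
    moreover have "((\<lambda>_. 0)::nat \<Rightarrow> 'a)(0:=0) = (\<lambda>_. 0)" by auto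
    ultimately show ?thesis by simp
  qed
  define U where "U = S -` {-1<..<1}"
  have "open (S -` {-1<..<1} \<inter> UNIV)"
    using cS continuous_on_open_vimage[of UNIV S] by auto
  then have "open U" unfolding U_def by simp
  then have "openin (product_topology (\<lambda>i. euclidean) UNIV) U" unfolding open_fun_def .
  moreover have z0U: "(\<lambda>_. 0) \<in> U" unfolding U_def using z0 by simp
  ultimately obtain V where V: "\<forall>i\<in>UNIV. openin euclidean (V i)" "(\<lambda>_. 0) \<in> Pi\<^sub>E UNIV V" "Pi\<^sub>E UNIV V \<subseteq> U"
    unfolding openin_product_topology_alt by blast
  have Vo: "open (V i)" for i using V(1) by simp
  have V0: "0 \<in> V i" for i using V(2) by (simp add: PiE_iff)
  have "\<exists>e>0. ball 0 e \<subseteq> V i" for i using Vo V0 open_contains_ball by blast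
  then obtain E where E: "\<And>i. E i > 0 \<and> ball 0 (E i) \<subseteq> V i" by metis
  define e where "e = Min (E ` {..<k})"
  have e0: "e > 0" unfolding e_def using E k by (subst Min_gr_iff) (auto simp: lessThan_empty_iff)
  have eE: "e \<le> E i" if "i < k" for i unfolding e_def using that by (intro Min_le) auto
  have ub: "\<bar>S w\<bar> \<le> 1 / (e/2)^k" if w: "\<forall>i<k. norm (w i) \<le> 1" for w
  proof -
    define v where "v = (\<lambda>i. if i < k then (e/2) *\<^sub>R w i else 0)"
    have "v i \<in> V i" for i
    proof (cases "i < k")
      case True
      have "norm (v i) \<le> e/2" unfolding v_def using True w e0 by (simp add: mult_left_le)
      then have "v i \<in> ball 0 (E i)" using eE[OF True] e0 by (simp add: dist_norm)
      then show ?thesis using E by blast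
    next
      case False
      then show ?thesis unfolding v_def using V0 by simp
    qed
    then have "v \<in> Pi\<^sub>E UNIV V" by (simp add: PiE_iff)
    then have "v \<in> U" using V(3) by blast
    then have a1: "\<bar>S v\<bar> < 1" unfolding U_def by (simp add: abs_less_iff)
    have "S v = S (\<lambda>i. if i < k then (e/2) *\<^sub>R w i else w i)" by (rule loc) (simp add: v_def)
    also have "\<dots> = (\<Prod>i<k. e/2) * S w" by (rule ml_scale[OF lin]) simp
    also have "\<dots> = (e/2)^k * S w" by simp
    finally have "\<bar>(e/2)^k * S w\<bar> < 1" using a1 by simp
    then have "(e/2)^k * \<bar>S w\<bar> < 1" using e0 by (simp add: abs_mult)
    then show ?thesis using e0 by (simp add: field_simps)
  qed
  have bdd: "bdd_above {\<bar>S w\<bar> | w. \<forall>i<k. norm (w i) \<le> 1}"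
    by (rule bdd_aboveI[where M="1 / (e/2)^k"]) (use ub in auto)
  have unit: "\<bar>S w\<bar> \<le> 1" if "\<forall>i<k. norm (w i) \<le> 1" for w
  proof -
    have "\<bar>S w\<bar> \<le> Sup {\<bar>S w\<bar> | w. \<forall>i<k. norm (w i) \<le> 1}"
      by (rule cSup_upper) (use that bdd in auto)
    then show ?thesis using n unfolding mlnorm_def by simp
  qed
  show ?thesis
  proof (cases "\<exists>i<k. w i = 0")
    case True
    then obtain i where i: "i < k" "w i = 0" by blast
    have "linear (\<lambda>y. S (w(i:=y)))" using lin i by auto
    from linear_0[OF this] have "S (w(i := 0)) = 0" .
    moreover have "w(i := 0) = w" using i by auto
    ultimately have "S w = 0" by simp
    then show ?thesis by (simp add: prod_nonneg)
  next
    case False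
    define v where "v = (\<lambda>i. if i < k then (1 / norm (w i)) *\<^sub>R w i else w i)"
    have vn: "\<forall>i<k. norm (v i) \<le> 1" unfolding v_def using False by simp
    have "w = (\<lambda>i. if i < k then norm (w i) *\<^sub>R v i else v i)"
      unfolding v_def using False by (auto simp: fun_eq_iff)
    then have "S w = (\<Prod>i<k. norm (w i)) * S v"
      using ml_scale[OF lin, of k "\<lambda>i. norm (w i)" v] by simp
    then have "\<bar>S w\<bar> = (\<Prod>i<k. norm (w i)) * \<bar>S v\<bar>" by (simp add: abs_mult prod_nonneg)
    also have "\<dots> \<le> (\<Prod>i<k. norm (w i)) * 1"
      using unit[OF vn] by (intro mult_left_mono) (auto simp: prod_nonneg)
    finally show ?thesis by simp
  qed
qed

theorem lemma1p6:
  fixes x :: "nat \<Rightarrow> 'a::{real_inner, complete_space}"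
    and S T :: "(nat \<Rightarrow> 'a) \<Rightarrow> real"
    and k :: nat
  assumes "k \<ge> 2"
    and "\<forall>i<k. norm (x i) = 1"
    and "dim (span (x ` {..<k})) = 2"
    and "S \<in> Ls k" and "T \<in> Ls k"
    and "mlnorm k S = 1" and "mlnorm k T = 1"
    and "S x = 1" and "T x = 1"
  shows "\<forall>w. (\<forall>i<k. w i \<in> span (x ` {..<k})) \<longrightarrow> S w = T w"
proof -
  define P where "P = span (x ` {..<k})"
  have P: "subspace P" unfolding P_def by simp
  have dP: "dim P = 2" using assms(3) unfolding P_def .
  have k1: "1 \<le> k" using assms(1) by simp
  have goodI: "good k P R" if R: "R \<in> Ls k" "mlnorm k R = 1" for R
  proof -
    have kl: "klinear k R" and ks: "ksymmetric k R" using R unfolding Ls_def by auto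
    show ?thesis unfolding good_def
    proof (intro conjI)
      show "\<forall>w w'. (\<forall>i<k. w i = w' i) \<longrightarrow> R w = R w'" using kl unfolding klinear_def by blast
      show "\<forall>i<k. \<forall>w. linear (\<lambda>y. R (w(i := y)))" using kl unfolding klinear_def by blast
      show "\<forall>i<k. \<forall>j<k. \<forall>w. R (w \<circ> Transposition.transpose i j) = R w"
        using ks unfolding ksymmetric_def by (auto intro: permutes_swap_id)
      show "\<forall>w. (\<forall>i<k. w i \<in> P) \<longrightarrow> \<bar>R w\<bar> \<le> (\<Prod>i<k. norm (w i))"
        using Ls_bound[OF R k1] by blast
    qed
  qed
  have gS: "good k P S" by (rule goodI[OF assms(4,6)])
  have gT: "good k P T" by (rule goodI[OF assms(5,7)])
  have xu: "\<forall>i<k. x i \<in> P \<and> norm (x i) = 1" using assms(2) unfolding P_def by (auto intro: span_base)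
  obtain i j where ij: "i < k" "j < k" "\<not> par (x i) (x j)"
  proof (rule ccontr)
    assume "\<not> thesis"
    with that have allp: "\<forall>i<k. \<forall>j<k. par (x i) (x j)" by blast
    have x0: "x 0 \<noteq> 0"
    proof
      assume "x 0 = 0"
      then have "norm (x 0) = 0" by simp
      with assms(2) k1 show False by simp
    qed
    have "x ` {..<k} \<subseteq> span {x 0}"
    proof
      fix y assume "y \<in> x ` {..<k}"
      then obtain n where n: "n < k" "y = x n" by auto
      have "par (x 0) (x n)" using allp n k1 by auto
      then obtain c where "x n = c *\<^sub>R x 0 \<or> x 0 = c *\<^sub>R x n" unfolding par_def by blast
      then have "\<exists>c. x n = c *\<^sub>R x 0"
      proof
        assume h: "x 0 = c *\<^sub>R x n"
        then have "c \<noteq> 0" using x0 by auto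
        then have "x n = (1/c) *\<^sub>R x 0" using h by simp
        then show ?thesis by blast
      qed blast
      then show "y \<in> span {x 0}" using n unfolding span_singleton by auto
    qed
    then have "P \<subseteq> span {x 0}" unfolding P_def using span_mono[of "x ` {..<k}" "span {x 0}"] by (simp add: span_span)
    then have "dim P \<le> card {x 0}" by (intro dim_le_card) auto
    then show False using dP by simp
  qed
  have "\<forall>w. (\<forall>i<k. w i \<in> P) \<longrightarrow> S w = T w"
    by (rule core[OF assms(1) P dP gS gT xu ij assms(8,9)])
  then show ?thesis unfolding P_def .
qed

end
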